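(* Consider the binary-symmetric parallel-relay (BSPR) network with $K\ge 1$ relays. Its capacity satisfies $C \leq R_\textnormal{ub}$, where \[ R_\textnormal{ub} = \min \left\{ \max_{p(u)} I(U;\bar{V}),\; K - \sum_{i=1}^K H(p_{i,d}) \right\}, \] where $\bar V=(V_1,\dots,V_K)$ with $V_i=U\oplus Z_i$ (single-letter), the $Z_i$ independent of each other and of $U$, $Z_i\sim\mathrm{Bernoulli}(p_{s,i})$, and the maximum is over distributions of $U\in\{0,1\}$.
   Context: BSPR network with $K$ relays: a source, relays $1,\dots,K$, and a destination. At each network use $t$, the source sends $U[t]\in\{0,1\}$; relay $i$ receives $V_i[t]=U[t]\oplus Z_i[t]$ with $\Pr\{Z_i=1\}=p_{s,i}$, $0\le p_{s,i}\le 1/2$; relay $i$ sends $X_i[t]\in\{0,1\}$ and the destination receives $Y_i[t]=X_i[t]\oplus E_i[t]$ with $\Pr\{E_i=1\}=p_{i,d}$, $0\le p_{i,d}\le 1/2$ ($\oplus$ is addition mod 2). All $Z_i,E_i$ are mutually independent and i.i.d. over network uses. An $(M,n)$ code consists of a message $W$ uniform on $\{0,\dots,M-1\}$, a source encoder $(U[1],\dots,U[n])=f_S(W)$, relay encoders $X_i[t]=f_{i,t}(V_i[1],\dots,V_i[t-1])$ for $t=1,\dots,n$, and a decoder $\hat W=g(\boldsymbol Y_1,\dots,\boldsymbol Y_K)$ where $\boldsymbol Y_i=(Y_i[1],\dots,Y_i[n])$. Its rate is $(\log_2 M)/n$ and its average error probability is $P_e=\frac1M\sum_w\Pr\{\hat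 W\ne w\mid W=w\}$. A rate $R$ is achievable if for every $\epsilon>0$ there exists, for all sufficiently large $n$, a $(2^{nR},n)$ code with $P_e\le\epsilon$; the capacity $C$ is the supremum of achievable rates. $H(p)=-p\log_2 p-(1-p)\log_2(1-p)$ with $H(0)=0$. *)

theory Defs
  imports Complex_Main
begin

text \<open>BSPR network with K relays, indexed 0..K-1; network uses indexed 0..n-1.
  Bits are booleans, exclusive-or is inequality on bool.\<close>

definition binary_entropy :: "real \<Rightarrow> real" where
  "binary_entropy p = (if p = 0 \<or> p = 1 then 0
      else - p * log 2 p - (1 - p) * log 2 (1 - p))"

text \<open>Noise realisations (Z or E) over K links and n uses; zero outside the range.\<close>
definition noise_set :: "nat \<Rightarrow> nat \<Rightarrow> (nat \<Rightarrow> nat \<Rightarrow> bool) set" where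
  "noise_set K n = {z. \<forall>i t. z i t \<longrightarrow> i < K \<and> t < n}"

definition noise_prob :: "(nat \<Rightarrow> real) \<Rightarrow> nat \<Rightarrow> nat \<Rightarrow> (nat \<Rightarrow> nat \<Rightarrow> bool) \<Rightarrow> real" where
  "noise_prob p K n z = (\<Prod>i<K. \<Prod>t<n. if z i t then p i else 1 - p i)"

text \<open>Received sequence of relay i: V_i[t] = U[t] xor Z_i[t].\<close>
definition relay_in :: "nat \<Rightarrow> (nat \<Rightarrow> nat \<Rightarrow> bool) \<Rightarrow> nat \<Rightarrow> (nat \<Rightarrow> nat \<Rightarrow> bool) \<Rightarrow> nat \<Rightarrow> nat \<Rightarrow> bool" where
  "relay_in n fS w z i = (\<lambda>t. if t < n then fS w t \<noteq> z i t else False)"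

text \<open>Sequences received by the destination: Y_i[t] = X_i[t] xor E_i[t],
  with X_i[t] = fR i t V_i.\<close>
definition dest_out ::
  "nat \<Rightarrow> nat \<Rightarrow> (nat \<Rightarrow> nat \<Rightarrow> bool) \<Rightarrow> (nat \<Rightarrow> nat \<Rightarrow> (nat \<Rightarrow> bool) \<Rightarrow> bool)
     \<Rightarrow> nat \<Rightarrow> (nat \<Rightarrow> nat \<Rightarrow> bool) \<Rightarrow> (nat \<Rightarrow> nat \<Rightarrow> bool) \<Rightarrow> nat \<Rightarrow> nat \<Rightarrow> bool" where
  "dest_out K n fS fR w z e =
     (\<lambda>i t. if i < K \<and> t < n then fR i t (relay_in n fS w z i) \<noteq> e i t else False)"

definition causal_relays :: "(nat \<Rightarrow> nat \<Rightarrow> (nat \<Rightarrow> bool) \<Rightarrow> bool) \<Rightarrow> bool" where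
  "causal_relays fR = (\<forall>i t v v'. (\<forall>s<t. v s = v' s) \<longrightarrow> fR i t v = fR i t v')"

definition error_prob ::
  "nat \<Rightarrow> (nat \<Rightarrow> real) \<Rightarrow> (nat \<Rightarrow> real) \<Rightarrow> nat \<Rightarrow> nat \<Rightarrow> (nat \<Rightarrow> nat \<Rightarrow> bool)
     \<Rightarrow> (nat \<Rightarrow> nat \<Rightarrow> (nat \<Rightarrow> bool) \<Rightarrow> bool) \<Rightarrow> ((nat \<Rightarrow> nat \<Rightarrow> bool) \<Rightarrow> nat) \<Rightarrow> real" where
  "error_prob K ps pd n M fS fR g =
     (1 / real M) * (\<Sum>w<M. \<Sum>z\<in>noise_set K n. \<Sum>e\<in>noise_set K n.
        noise_prob ps K n z * noise_prob pd K n e *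
        (if g (dest_out K n fS fR w z e) \<noteq> w then 1 else 0))"

definition achievable :: "nat \<Rightarrow> (nat \<Rightarrow> real) \<Rightarrow> (nat \<Rightarrow> real) \<Rightarrow> real \<Rightarrow> bool" where
  "achievable K ps pd R =
     (\<forall>\<epsilon>>0. \<exists>N. \<forall>n\<ge>N. \<exists>fS fR g. causal_relays fR \<and>
        error_prob K ps pd n (nat \<lceil>2 powr (real n * R)\<rceil>) fS fR g \<le> \<epsilon>)"

definition capacity :: "nat \<Rightarrow> (nat \<Rightarrow> real) \<Rightarrow> (nat \<Rightarrow> real) \<Rightarrow> real" where
  "capacity K ps pd = Sup {R. achievable K ps pd R}"

text \<open>Single-letter mutual information I(U; V_1..V_K) with Pr{U=1} = q.\<close>
definition out_set :: "nat \<Rightarrow> (nat \<Rightarrow> bool) set" where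
  "out_set K = {v. \<forall>i. v i \<longrightarrow> i < K}"

definition in_prob :: "real \<Rightarrow> bool \<Rightarrow> real" where
  "in_prob q u = (if u then q else 1 - q)"

definition cond_prob :: "(nat \<Rightarrow> real) \<Rightarrow> nat \<Rightarrow> bool \<Rightarrow> (nat \<Rightarrow> bool) \<Rightarrow> real" where
  "cond_prob ps K u v = (\<Prod>i<K. if v i \<noteq> u then ps i else 1 - ps i)"

definition mutual_info :: "(nat \<Rightarrow> real) \<Rightarrow> nat \<Rightarrow> real \<Rightarrow> real" where
  "mutual_info ps K q =
     (\<Sum>u\<in>(UNIV :: bool set). \<Sum>v\<in>out_set K.
        (let a = in_prob q u * cond_prob ps K u v;
             pv = (\<Sum>u'\<in>(UNIV :: bool set). in_prob q u' * cond_prob ps K u' v)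
         in if a = 0 then 0 else a * log 2 (cond_prob ps K u v / pv)))"

definition R_ub :: "nat \<Rightarrow> (nat \<Rightarrow> real) \<Rightarrow> (nat \<Rightarrow> real) \<Rightarrow> real" where
  "R_ub K ps pd = min (SUP q\<in>{0..1}. mutual_info ps K q)
                      (real K - (\<Sum>i<K. binary_entropy (pd i)))"

end

theory Submission imports Defs "HOL-Library.FuncSet" begin


lemma sum_prod_box:
  assumes "finite A" "finite S"
  shows "(\<Sum>f\<in>{f. (\<forall>x. x\<notin>A \<longrightarrow> f x = d) \<and> (\<forall>x\<in>A. f x \<in> S)}. \<Prod>x\<in>A. h x (f x))
         = (\<Prod>x\<in>A. \<Sum>y\<in>S. (h x y :: real))"
proof -
  have "(\<Sum>f\<in>{f. (\<forall>x. x\<notin>A \<longrightarrow> f x = d) \<and> (\<forall>x\<in>A. f x \<in> S)}. \<Prod>x\<in>A. h x (f x))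
        = (\<Sum>g\<in>PiE A (\<lambda>_. S). \<Prod>x\<in>A. h x (g x))"
    by (rule sum.reindex_bij_witness[of _ "\<lambda>g x. if x\<in>A then g x else d" "\<lambda>f. restrict f A"])
       (auto simp: PiE_def extensional_def fun_eq_iff intro!: prod.cong)
  also have "\<dots> = (\<Prod>x\<in>A. \<Sum>y\<in>S. h x y)"
    using assms by (simp add: prod_sum_PiE)
  finally show ?thesis .
qed

lemma finite_out_set: "finite (out_set K)"
proof -
  have "out_set K \<subseteq> (\<lambda>B x. x \<in> B) ` Pow {..<K}"
  proof
    fix v assume "v \<in> out_set K"
    then show "v \<in> (\<lambda>B x. x \<in> B) ` Pow {..<K}"
      by (auto simp: out_set_def image_iff intro!: bexI[of _ "{x. v x}"])
  qed
  then show ?thesis by (rule finite_subset) auto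
qed

lemma finite_noise_set: "finite (noise_set K n)"
proof -
  have "noise_set K n \<subseteq> (\<lambda>B i t. (i,t) \<in> B) ` Pow ({..<K}\<times>{..<n})"
  proof
    fix z assume "z \<in> noise_set K n"
    then show "z \<in> (\<lambda>B i t. (i,t) \<in> B) ` Pow ({..<K}\<times>{..<n})"
      by (auto simp: noise_set_def image_iff intro!: bexI[of _ "{(i,t). z i t}"])
  qed
  then show ?thesis by (rule finite_subset) auto
qed

lemma out_set_eq: "out_set K = {f. (\<forall>x. x\<notin>{..<K} \<longrightarrow> f x = False) \<and> (\<forall>x\<in>{..<K}. f x \<in> UNIV)}"
  by (auto simp: out_set_def)

lemma noise_set_eq: "noise_set K n = {f. (\<forall>x. x\<notin>{..<K} \<longrightarrow> f x = (\<lambda>_. False)) \<and> (\<forall>x\<in>{..<K}. f x \<in> out_set n)}"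
  by (auto simp: noise_set_def out_set_def fun_eq_iff)

lemma sum_out:
  "(\<Sum>v\<in>out_set K. \<Prod>i<K. h i (v i)) = (\<Prod>i<K. h i True + (h i False :: real))"
  unfolding out_set_eq by (subst sum_prod_box) (auto simp: UNIV_bool add.commute)

lemma sum_noise:
  "(\<Sum>z\<in>noise_set K n. \<Prod>i<K. \<Prod>t<n. h i t (z i t)) = (\<Prod>i<K. \<Prod>t<n. h i t True + (h i t False :: real))"
proof -
  have "(\<Sum>z\<in>noise_set K n. \<Prod>i<K. \<Prod>t<n. h i t (z i t)) = (\<Prod>i<K. \<Sum>v\<in>out_set n. \<Prod>t<n. h i t (v t))"
    unfolding noise_set_eq by (subst sum_prod_box) (auto simp: finite_out_set)
  also have "\<dots> = (\<Prod>i<K. \<Prod>t<n. h i t True + h i t False)"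
    by (simp add: sum_out)
  finally show ?thesis .
qed

lemma sum_noise_time:
  "(\<Sum>v\<in>noise_set K n. \<Prod>t<n. h t (\<lambda>i. v i t)) = (\<Prod>t<n. \<Sum>y\<in>out_set K. (h t y :: real))"
proof -
  have "(\<Sum>v\<in>noise_set K n. \<Prod>t<n. h t (\<lambda>i. v i t)) = (\<Sum>v\<in>noise_set n K. \<Prod>t<n. h t (v t))"
    by (rule sum.reindex_bij_witness[of _ "\<lambda>v i t. v t i" "\<lambda>v t i. v i t"])
       (auto simp: noise_set_def)
  also have "\<dots> = (\<Prod>t<n. \<Sum>y\<in>out_set K. h t y)"
    unfolding noise_set_eq by (subst sum_prod_box) (auto simp: finite_out_set)
  finally show ?thesis .
qed

lemma card_noise: "card (noise_set K n) = (2::real) ^ (K*n)"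
proof -
  have "real (card (noise_set K n)) = (\<Sum>z\<in>noise_set K n. \<Prod>i<K. \<Prod>t<n. (\<lambda>i t b. 1::real) i t (z i t))"
    by simp
  also have "\<dots> = 2 ^ (K*n)" by (subst sum_noise) (simp add: power_mult[symmetric] mult.commute)
  finally show ?thesis by simp
qed



lemma exp_le_quad: assumes "x \<le> 1" shows "exp x \<le> 1 + x + (x::real)^2"
proof (cases "x \<ge> 0")
  case True then show ?thesis using exp_bound assms by auto
next
  case False
  define y where "y = -x"
  have y: "y > 0" using False y_def by auto
  have "exp x = 1 / exp y" by (simp add: y_def exp_minus field_simps)
  also have "\<dots> \<le> 1 / (1 + y)" using y by (intro divide_left_mono) (auto simp: add_pos_pos)
  also have "\<dots> \<le> 1 - y + y^2"
  proof -
    have "1 \<le> (1 - y + y^2) * (1 + y)" using y by (simp add: algebra_simps power2_eq_square power3_eq_cube)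
    then show ?thesis using y by (simp add: divide_le_eq)
  qed
  finally show ?thesis by (simp add: y_def)
qed

lemma tilt:
  fixes P r :: "'b \<Rightarrow> real" and s :: real
  assumes "finite S" "\<And>y. y\<in>S \<Longrightarrow> P y \<ge> 0"
    and "\<And>y. y\<in>S \<Longrightarrow> P y > 0 \<Longrightarrow> r y > 0 \<and> s * ln (r y) \<le> 1" and "s \<ge> 0"
  shows "(\<Sum>y\<in>S. P y * r y powr s) \<le> (\<Sum>y\<in>S. P y) + s*(\<Sum>y\<in>S. P y * ln (r y)) + s^2*(\<Sum>y\<in>S. P y * (ln (r y))^2)"
proof -
  have "(\<Sum>y\<in>S. P y * r y powr s) \<le> (\<Sum>y\<in>S. P y + s * (P y * ln (r y)) + s^2 * (P y * (ln (r y))^2))"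
  proof (intro sum_mono)
    fix y assume y: "y \<in> S"
    show "P y * r y powr s \<le> P y + s * (P y * ln (r y)) + s^2 * (P y * (ln (r y))^2)"
    proof (cases "P y > 0")
      case True
      with assms(3)[OF y] have r: "r y > 0" "s * ln (r y) \<le> 1" by auto
      have "r y powr s = exp (s * ln (r y))" using r by (simp add: powr_def mult.commute)
      also have "\<dots> \<le> 1 + s * ln (r y) + (s * ln (r y))^2" by (rule exp_le_quad) (use r in auto)
      finally have "P y * r y powr s \<le> P y * (1 + s * ln (r y) + (s * ln (r y))^2)"
        using True by (intro mult_left_mono) auto
      then show ?thesis by (simp add: algebra_simps power2_eq_square)
    next
      case False
      then have "P y = 0" using assms(2)[OF y] by auto
      then show ?thesis by simp
    qed
  qed
  also have "\<dots> = (\<Sum>y\<in>S. P y) + s*(\<Sum>y\<in>S. P y * ln (r y)) + s^2*(\<Sum>y\<in>S. P y * (ln (r y))^2)"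
    by (simp add: sum.distrib sum_distrib_left)
  finally show ?thesis .
qed

lemma arim:
  fixes a b phi tau s :: real
  assumes "a \<ge> 0" "b \<ge> 0" "a > 0 \<Longrightarrow> b > 0" "0 \<le> phi" "phi \<le> 1" "tau > 0" "s \<ge> 0"
  shows "a * phi \<le> a * (a / (tau * b)) powr s + tau * b * phi"
proof (cases "a \<le> tau * b")
  case True
  then have "a * phi \<le> tau * b * phi" using assms by (intro mult_right_mono) auto
  moreover have "0 \<le> a * (a / (tau * b)) powr s" using assms by auto
  ultimately show ?thesis by linarith
next
  case False
  then have "a > 0" using assms by (smt (verit) mult_nonneg_nonneg)
  then have "b > 0" using assms by auto
  have "1 \<le> a / (tau * b)" using False \<open>b>0\<close> assms by (simp add: le_divide_eq)
  then have "1 \<le> (a / (tau * b)) powr s" using assms by (intro ge_one_powr_ge_zero) auto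
  then have "a * phi \<le> a * (a / (tau * b)) powr s"
    using assms \<open>a>0\<close> by (smt (verit) mult_left_mono mult_right_le_one_le)
  moreover have "0 \<le> tau * b * phi" using assms by auto
  ultimately show ?thesis by linarith
qed

lemma not_achievable:
  assumes "0 \<le> a" "a < 1" "0 \<le> b" "b < 1"
    and "\<And>n fS fR g. error_prob K ps pd n (nat \<lceil>2 powr (real n * R)\<rceil>) fS fR g \<ge> 1 - a^n - b^n"
  shows "\<not> achievable K ps pd R"
proof
  assume "achievable K ps pd R"
  then obtain N where N: "\<forall>n\<ge>N. \<exists>fS fR g. causal_relays fR \<and>
        error_prob K ps pd n (nat \<lceil>2 powr (real n * R)\<rceil>) fS fR g \<le> 1/4"
    unfolding achievable_def by (meson divide_pos_pos zero_less_numeral zero_less_one)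
  have "(\<lambda>n. a^n) \<longlonglongrightarrow> 0" "(\<lambda>n. b^n) \<longlonglongrightarrow> 0"
    using assms by (auto intro!: LIMSEQ_power_zero)
  then have "eventually (\<lambda>n. a^n < 1/4) sequentially" "eventually (\<lambda>n. b^n < 1/4) sequentially"
    using order_tendstoD(2)[of "\<lambda>n. a^n" 0 sequentially "1/4"] order_tendstoD(2)[of "\<lambda>n. b^n" 0 sequentially "1/4"]
    by auto
  then obtain N' where N': "\<And>n. n \<ge> N' \<Longrightarrow> a^n < 1/4 \<and> b^n < 1/4"
    by (metis (mono_tags, lifting) eventually_conj eventually_sequentially)
  define n where "n = max N N'"
  have "n \<ge> N" by (simp add: n_def)
  then obtain fS fR g where "error_prob K ps pd n (nat \<lceil>2 powr (real n * R)\<rceil>) fS fR g \<le> 1/4"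
    using N by blast
  moreover have "error_prob K ps pd n (nat \<lceil>2 powr (real n * R)\<rceil>) fS fR g \<ge> 1 - a^n - b^n"
    by (rule assms)
  moreover have "a^n < 1/4" "b^n < 1/4" using N' n_def by auto
  ultimately show False by linarith
qed



definition succ where
  "succ K ps pd n M fS fR g = (\<Sum>w<M. \<Sum>z\<in>noise_set K n. \<Sum>e\<in>noise_set K n.
        noise_prob ps K n z * noise_prob pd K n e *
        (if g (dest_out K n fS fR w z e) = w then 1 else 0))"

lemma noise_prob_sum: "(\<Sum>z\<in>noise_set K n. noise_prob p K n z) = 1"
  unfolding noise_prob_def
  using sum_noise[where h="\<lambda>i t b. if b then p i else 1 - p i" and K=K and n=n] by simp

lemma noise_prob_nonneg: "\<forall>i<K. 0 \<le> p i \<and> p i \<le> 1 \<Longrightarrow> 0 \<le> noise_prob p K n z"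
  unfolding noise_prob_def by (intro prod_nonneg) auto

lemma error_succ:
  assumes "M > 0"
  shows "error_prob K ps pd n M fS fR g = 1 - succ K ps pd n M fS fR g / M"
proof -
  let ?N = "noise_set K n"
  have "error_prob K ps pd n M fS fR g = (1 / real M) * (\<Sum>w<M. \<Sum>z\<in>?N. \<Sum>e\<in>?N.
        noise_prob ps K n z * noise_prob pd K n e - noise_prob ps K n z * noise_prob pd K n e *
        (if g (dest_out K n fS fR w z e) = w then 1 else 0))"
    unfolding error_prob_def by (intro arg_cong[where f="\<lambda>x. _ * x"] sum.cong) auto
  also have "\<dots> = (1 / real M) * ((\<Sum>w<M. \<Sum>z\<in>?N. \<Sum>e\<in>?N.
        noise_prob ps K n z * noise_prob pd K n e) - succ K ps pd n M fS fR g)"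
    unfolding succ_def by (simp add: sum_subtractf)
  also have "(\<Sum>w<M. \<Sum>z\<in>?N. \<Sum>e\<in>?N. noise_prob ps K n z * noise_prob pd K n e) = M"
    by (simp add: sum_distrib_left[symmetric] noise_prob_sum)
  finally show ?thesis using assms by (simp add: field_simps)
qed

lemma dest_out_bij:
  assumes "\<And>y. y \<in> noise_set K n \<Longrightarrow> f y \<ge> (0::real)"
  shows "(\<Sum>e\<in>noise_set K n. f (dest_out K n fS fR w z e)) = (\<Sum>y\<in>noise_set K n. f y)"
proof -
  define x where "x i t = fR i t (relay_in n fS w z i)" for i t
  have d: "dest_out K n fS fR w z = (\<lambda>e i t. if i<K \<and> t<n then x i t \<noteq> e i t else False)"
    by (auto simp: dest_out_def x_def fun_eq_iff)
  show ?thesis unfolding d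
    by (rule sum.reindex_bij_witness[of _ "\<lambda>e i t. if i<K \<and> t<n then x i t \<noteq> e i t else False"
          "\<lambda>e i t. if i<K \<and> t<n then x i t \<noteq> e i t else False"])
       (auto simp: noise_set_def fun_eq_iff)
qed

lemma powr_div_lem: "(x::real) * (x / y) powr s = y powr (-s) * (x * x powr s)"
  by (simp add: powr_divide powr_minus_divide)

lemma cut2_succ:
  assumes ps: "\<forall>i<K. 0 \<le> ps i \<and> ps i \<le> 1" and pd: "\<forall>i<K. 0 \<le> pd i \<and> pd i \<le> 1"
    and tau: "tau > 0" and s: "s \<ge> 0"
  shows "succ K ps pd n M fS fR g \<le> real M * (tau / 2^(K*n)) powr (-s) *
     (\<Prod>i<K. pd i * pd i powr s + (1 - pd i) * (1 - pd i) powr s)^n + tau"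
proof -
  let ?N = "noise_set K n"
  let ?c = "1 / (2::real)^(K*n)"
  let ?Pz = "noise_prob ps K n" and ?Pe = "noise_prob pd K n"
  let ?G = "(\<Prod>i<K. pd i * pd i powr s + (1 - pd i) * (1 - pd i) powr s)"
  let ?A = "(tau * ?c) powr (-s) * ?G^n"
  let ?ind = "\<lambda>w z e. if g (dest_out K n fS fR w z e) = w then 1 else (0::real)"
  have c: "?c > 0" by simp
  have sumPe: "(\<Sum>e\<in>?N. ?Pe e * ?Pe e powr s) = ?G^n"
  proof -
    have "(\<Sum>e\<in>?N. ?Pe e * ?Pe e powr s) = (\<Sum>e\<in>?N. \<Prod>i<K. \<Prod>t<n.
       (\<lambda>i t b. (if b then pd i else 1 - pd i) * (if b then pd i else 1 - pd i) powr s) i t (e i t))"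
      unfolding noise_prob_def by (simp add: prod_powr_distrib prod.distrib)
    also have "\<dots> = ?G^n" by (subst sum_noise) (simp add: prod_power_distrib)
    finally show ?thesis .
  qed
  have one: "(\<Sum>e\<in>?N. ?Pe e * ?ind w z e) \<le> ?A + tau * ?c * (\<Sum>e\<in>?N. ?ind w z e)" for w z
  proof -
    have "(\<Sum>e\<in>?N. ?Pe e * ?ind w z e) \<le> (\<Sum>e\<in>?N. ?Pe e * (?Pe e / (tau * ?c)) powr s + tau * ?c * ?ind w z e)"
      by (intro sum_mono arim noise_prob_nonneg pd) (use tau s in auto)
    also have "\<dots> = (tau * ?c) powr (-s) * (\<Sum>e\<in>?N. ?Pe e * ?Pe e powr s) + tau * ?c * (\<Sum>e\<in>?N. ?ind w z e)"
      by (simp only: sum.distrib powr_div_lem sum_distrib_left[symmetric])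
    finally show ?thesis by (simp add: sumPe)
  qed
  have cnt: "(\<Sum>w<M. \<Sum>e\<in>?N. ?ind w z e) \<le> 2^(K*n)" for z
  proof -
    have "(\<Sum>w<M. \<Sum>e\<in>?N. ?ind w z e) = (\<Sum>w<M. \<Sum>y\<in>?N. if g y = w then 1 else (0::real))"
      by (intro sum.cong refl dest_out_bij) auto
    also have "\<dots> = (\<Sum>y\<in>?N. \<Sum>w<M. if g y = w then 1 else (0::real))" by (rule sum.swap)
    also have "\<dots> \<le> (\<Sum>y\<in>?N. 1)"
      by (intro sum_mono) (auto simp: sum.If_cases)
    also have "\<dots> = 2^(K*n)" using card_noise by simp
    finally show ?thesis .
  qed
  have "succ K ps pd n M fS fR g = (\<Sum>w<M. \<Sum>z\<in>?N. ?Pz z * (\<Sum>e\<in>?N. ?Pe e * ?ind w z e))"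
    unfolding succ_def by (simp add: sum_distrib_left mult.assoc)
  also have "\<dots> \<le> (\<Sum>w<M. \<Sum>z\<in>?N. ?Pz z * (?A + tau * ?c * (\<Sum>e\<in>?N. ?ind w z e)))"
    by (intro sum_mono mult_left_mono one noise_prob_nonneg ps)
  also have "\<dots> = real M * ?A + tau * ?c * (\<Sum>z\<in>?N. ?Pz z * (\<Sum>w<M. \<Sum>e\<in>?N. ?ind w z e))"
    by (simp add: algebra_simps sum.distrib sum_distrib_left[symmetric] sum_distrib_right[symmetric] noise_prob_sum)
      (simp add: sum_distrib_left sum.swap[of _ "{..<M}"] mult.assoc sum_divide_distrib[symmetric])
  also have "\<dots> \<le> real M * ?A + tau * ?c * (\<Sum>z\<in>?N. ?Pz z * 2^(K*n))"
    using tau by (intro add_left_mono mult_left_mono sum_mono cnt noise_prob_nonneg ps) auto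
  also have "\<dots> = real M * ?A + tau"
    by (simp add: sum_distrib_right[symmetric] noise_prob_sum)
  finally show ?thesis by (simp add: mult.assoc)
qed



definition Qh where "Qh ps K v = (cond_prob ps K False v + cond_prob ps K True v) / 2"
definition Fs where "Fs ps K s u = (\<Sum>y\<in>out_set K. cond_prob ps K u y * (cond_prob ps K u y / Qh ps K y) powr s)"

lemma cond_sum: "(\<Sum>y\<in>out_set K. cond_prob ps K u y) = 1"
  unfolding cond_prob_def
  using sum_out[where h="\<lambda>i b. if b \<noteq> u then ps i else 1 - ps i" and K=K] by (cases u) simp_all

lemma cond_nonneg: "\<forall>i<K. 0 \<le> ps i \<and> ps i \<le> 1 \<Longrightarrow> 0 \<le> cond_prob ps K u y"
  unfolding cond_prob_def by (intro prod_nonneg) auto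

lemma Qh_sum: "(\<Sum>y\<in>out_set K. Qh ps K y) = 1"
  unfolding Qh_def by (simp add: sum_divide_distrib[symmetric] sum.distrib cond_sum)

lemma cond_le_Qh: "\<forall>i<K. 0 \<le> ps i \<and> ps i \<le> 1 \<Longrightarrow> cond_prob ps K u y \<le> 2 * Qh ps K y"
  unfolding Qh_def using cond_nonneg[of K ps "\<not>u" y] by (cases u) auto

lemma Pz_eq:
  "noise_prob ps K n (\<lambda>i t. i<K \<and> t<n \<and> (v i t \<noteq> fS w t))
   = (\<Prod>t<n. cond_prob ps K (fS w t) (\<lambda>i. v i t))"
  unfolding noise_prob_def cond_prob_def
  by (subst prod.swap) (intro prod.cong refl, auto)

lemma powr_div_lem2: "(x::real) * (x / (tau * y)) powr s = tau powr (-s) * (x * (x / y) powr s)"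
  by (simp add: powr_divide powr_minus_divide powr_mult)

lemma cut1_succ:
  assumes ps: "\<forall>i<K. 0 \<le> ps i \<and> ps i \<le> 1" and pd: "\<forall>i<K. 0 \<le> pd i \<and> pd i \<le> 1"
    and tau: "tau > 0" and s: "s \<ge> 0"
  shows "succ K ps pd n M fS fR g \<le> real M * tau powr (-s) *
     (max (Fs ps K s False) (Fs ps K s True))^n + tau"
proof -
  let ?N = "noise_set K n"
  let ?Pz = "noise_prob ps K n" and ?Pe = "noise_prob pd K n"
  define Dec where "Dec v e = (\<lambda>i t. if i<K \<and> t<n then fR i t (v i) \<noteq> e i t else False)" for v e :: "nat \<Rightarrow> nat \<Rightarrow> bool"
  define Vr where "Vr w z = (\<lambda>i t. i<K \<and> relay_in n fS w z i t)" for w z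
  define phi where "phi w v = (\<Sum>e\<in>?N. ?Pe e * (if g (Dec v e) = w then 1 else (0::real)))" for w v
  define Pv where "Pv w v = (\<Prod>t<n. cond_prob ps K (fS w t) (\<lambda>i. v i t))" for w v
  define Q where "Q v = (\<Prod>t<n. Qh ps K (\<lambda>i. v i t))" for v :: "nat \<Rightarrow> nat \<Rightarrow> bool"
  define Fm where "Fm = max (Fs ps K s False) (Fs ps K s True)"
  have dd: "dest_out K n fS fR w z e = Dec (Vr w z) e" for w z e
    by (auto simp: dest_out_def Dec_def Vr_def fun_eq_iff)
  have phi_le: "(\<Sum>w<M. phi w v) \<le> 1" for v
  proof -
    have "(\<Sum>w<M. phi w v) = (\<Sum>e\<in>?N. ?Pe e * (\<Sum>w<M. if g (Dec v e) = w then 1 else (0::real)))"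
      unfolding phi_def sum_distrib_left by (rule sum.swap)
    also have "\<dots> \<le> (\<Sum>e\<in>?N. ?Pe e * 1)"
      by (intro sum_mono mult_left_mono noise_prob_nonneg pd) (auto simp: sum.If_cases)
    finally show ?thesis by (simp add: noise_prob_sum)
  qed
  have phi_nn: "0 \<le> phi w v" for w v
    unfolding phi_def by (intro sum_nonneg mult_nonneg_nonneg noise_prob_nonneg pd) auto
  have phi1: "phi w v \<le> 1" for w v
  proof -
    have "phi w v \<le> (\<Sum>e\<in>?N. ?Pe e * 1)"
      unfolding phi_def by (intro sum_mono mult_left_mono noise_prob_nonneg pd) auto
    then show "phi w v \<le> 1" by (simp add: noise_prob_sum)
  qed
  have Pv_Vr: "Pv w (Vr w z) = ?Pz z" if "z \<in> ?N" for w z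
    unfolding Pv_def Vr_def noise_prob_def cond_prob_def relay_in_def
    by (subst prod.swap) (intro prod.cong refl, auto)
  have reidx: "(\<Sum>z\<in>?N. ?Pz z * phi w (Vr w z)) = (\<Sum>v\<in>?N. Pv w v * phi w v)" for w
    by (rule sum.reindex_bij_witness[of _ "\<lambda>v i t. i<K \<and> t<n \<and> (v i t \<noteq> fS w t)" "Vr w"])
       (auto simp: Pv_Vr, auto simp: noise_set_def Vr_def relay_in_def fun_eq_iff)
  have Pv_nn: "0 \<le> Pv w v" for w v unfolding Pv_def by (intro prod_nonneg cond_nonneg ps) 
  have Q_nn: "0 \<le> Q v" for v unfolding Q_def Qh_def by (intro prod_nonneg) (auto intro!: add_nonneg_nonneg cond_nonneg ps)
  have PvQ: "Pv w v \<le> 2^n * Q v" for w v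
  proof -
    have "Pv w v \<le> (\<Prod>t<n. 2 * Qh ps K (\<lambda>i. v i t))"
      unfolding Pv_def by (intro prod_mono conjI cond_nonneg cond_le_Qh ps)
    then show ?thesis by (simp add: Q_def prod.distrib)
  qed
  have Fs_nn: "0 \<le> Fs ps K s u" for u unfolding Fs_def by (intro sum_nonneg mult_nonneg_nonneg cond_nonneg ps) auto
  have first: "(\<Sum>v\<in>?N. Pv w v * (Pv w v / Q v) powr s) \<le> Fm^n" for w
  proof -
    have "(\<Sum>v\<in>?N. Pv w v * (Pv w v / Q v) powr s) = (\<Sum>v\<in>?N. \<Prod>t<n.
       (\<lambda>t y. cond_prob ps K (fS w t) y * (cond_prob ps K (fS w t) y / Qh ps K y) powr s) t (\<lambda>i. v i t))"
      unfolding Pv_def Q_def by (simp add: prod_dividef[symmetric] prod_powr_distrib flip: prod.distrib)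
    also have "\<dots> = (\<Prod>t<n. Fs ps K s (fS w t))" by (subst sum_noise_time) (simp add: Fs_def)
    also have "\<dots> \<le> (\<Prod>t<n. Fm)" proof (intro prod_mono conjI Fs_nn)
      fix t show "Fs ps K s (fS w t) \<le> Fm" unfolding Fm_def by (cases "fS w t") auto
    qed
    finally show ?thesis by simp
  qed
  have Qsum: "(\<Sum>v\<in>?N. Q v) = 1"
    unfolding Q_def using sum_noise_time[where h="\<lambda>t y. Qh ps K y" and K=K and n=n] by (simp add: Qh_sum)
  have "succ K ps pd n M fS fR g = (\<Sum>w<M. \<Sum>z\<in>?N. ?Pz z * phi w (Vr w z))"
    unfolding succ_def phi_def dd by (simp add: sum_distrib_left mult.assoc)
  also have "\<dots> = (\<Sum>w<M. \<Sum>v\<in>?N. Pv w v * phi w v)" by (simp add: reidx)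
  also have "\<dots> \<le> (\<Sum>w<M. \<Sum>v\<in>?N. Pv w v * (Pv w v / (tau * Q v)) powr s + tau * Q v * phi w v)"
  proof (intro sum_mono arim)
    fix w v assume "v \<in> ?N" "0 < Pv w v"
    then show "0 < Q v" using PvQ[of w v] Q_nn[of v]
      by (smt (verit) mult_eq_0_iff)
  qed (use Pv_nn Q_nn phi_nn phi1 tau s in auto)
  also have "\<dots> = (\<Sum>w<M. tau powr (-s) * (\<Sum>v\<in>?N. Pv w v * (Pv w v / Q v) powr s)) + tau * (\<Sum>v\<in>?N. Q v * (\<Sum>w<M. phi w v))"
    by (simp only: sum.distrib powr_div_lem2 sum_distrib_left[symmetric])
      (simp add: sum_distrib_left sum.swap[of _ "{..<M}"] mult.assoc)
  also have "\<dots> \<le> (\<Sum>w<M. tau powr (-s) * Fm^n) + tau * (\<Sum>v\<in>?N. Q v * 1)"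
    using tau by (intro add_mono sum_mono mult_left_mono first phi_le Q_nn) auto
  also have "\<dots> = real M * tau powr (-s) * Fm^n + tau" by (simp add: Qsum)
  finally show ?thesis by (simp add: Fm_def)
qed



lemma final_bound:
  fixes I eta s C Y tau R S :: real and M n :: nat
  assumes eta: "eta > 0" and s: "s > 0" and R: "R = I + 2*eta" and Y: "0 \<le> Y"
    "Y \<le> exp (real n * (s * ln 2 * I + s^2 * C))"
    and M: "real M \<ge> 2 powr (real n * R)" and tau: "tau = exp (real n * (I + eta) * ln 2)"
    and S: "S \<le> real M * tau powr (-s) * Y + tau"
  shows "S / real M \<le> exp (s * (s * C - eta * ln 2))^n + exp (- eta * ln 2)^n"
proof -
  have Mpos: "real M > 0" using M by (smt (verit) powr_gt_zero)
  have "S / real M \<le> tau powr (-s) * Y + tau / real M"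
    using S Mpos by (simp add: field_simps)
  also have "tau powr (-s) * Y \<le> exp (- s * (real n * (I + eta) * ln 2)) * exp (real n * (s * ln 2 * I + s^2 * C))"
    using Y by (intro mult_mono) (auto simp: tau powr_def)
  also have "\<dots> = exp (s * (s * C - eta * ln 2))^n"
    by (simp add: exp_add[symmetric] exp_of_nat_mult[symmetric] algebra_simps power2_eq_square)
  also have "tau / real M \<le> tau / 2 powr (real n * R)"
    using M tau Mpos by (intro divide_left_mono) auto
  also have "\<dots> = exp (- eta * ln 2)^n"
    by (simp add: tau powr_def R exp_diff[symmetric] exp_of_nat_mult[symmetric] algebra_simps)
  finally show ?thesis by simp
qed

lemma pick_s:
  fixes eta C :: real
  assumes "eta > 0" "C \<ge> 0"
  obtains s where "s > 0" "s \<le> 1" "s * C - eta * ln 2 < 0"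
proof -
  define s where "s = min 1 (eta * ln 2 / (2 * (C + 1)))"
  have e: "eta * ln 2 > 0" using assms by simp
  have "s > 0" using e assms by (simp add: s_def)
  moreover have "s \<le> 1" by (simp add: s_def)
  moreover have "s * C \<le> eta * ln 2 / (2 * (C + 1)) * C"
    using assms by (intro mult_right_mono) (auto simp: s_def)
  moreover have "eta * ln 2 / (2 * (C + 1)) * C < eta * ln 2"
  proof -
    have "eta * ln 2 / (2 * (C + 1)) * C = eta * ln 2 * (C / (2 * (C + 1)))" by simp
    also have "\<dots> < eta * ln 2 * 1" using e assms by (intro mult_strict_left_mono) (auto simp: field_simps)
    finally show ?thesis by simp
  qed
  ultimately show ?thesis using that by force
qed

definition flip where "flip K v = (\<lambda>i. i < K \<and> \<not> v i)"

lemma cond_flip: "cond_prob ps K True (flip K y) = cond_prob ps K False y"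
   "cond_prob ps K False (flip K y) = cond_prob ps K True y"
  unfolding cond_prob_def flip_def by (auto intro!: prod.cong)

lemma sym_sum:
  "(\<Sum>y\<in>out_set K. h (cond_prob ps K True y) (Qh ps K y)) = (\<Sum>y\<in>out_set K. h (cond_prob ps K False y) (Qh ps K y))"
  by (rule sum.reindex_bij_witness[of _ "flip K" "flip K"])
     (auto simp: flip_def out_set_def fun_eq_iff Qh_def cond_flip[unfolded flip_def] add.commute)

definition Dv where "Dv ps K u = (\<Sum>y\<in>out_set K. if cond_prob ps K u y = 0 then 0
    else cond_prob ps K u y * log 2 (cond_prob ps K u y / Qh ps K y))"

lemma mi_half: "mutual_info ps K (1/2) = Dv ps K False"
proof -
  have "mutual_info ps K (1/2) = (Dv ps K True + Dv ps K False) / 2"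
    unfolding mutual_info_def Dv_def in_prob_def Qh_def UNIV_bool
    by (simp add: sum_divide_distrib[symmetric] sum.distrib[symmetric] Let_def algebra_simps sum_distrib_left)
       (intro sum.cong refl, auto simp: add_divide_distrib)
  moreover have "Dv ps K True = Dv ps K False"
    unfolding Dv_def by (rule sym_sum)
  ultimately show ?thesis by simp
qed

lemma Fs_sym: "Fs ps K s True = Fs ps K s False"
  unfolding Fs_def by (rule sym_sum)



lemma Fs_bound:
  assumes ps: "\<forall>i<K. 0 \<le> ps i \<and> ps i \<le> 1" and s: "0 \<le> s" "s \<le> 1"
  shows "Fs ps K s False \<le> 1 + s * ln 2 * Dv ps K False +
     s^2 * (\<Sum>y\<in>out_set K. cond_prob ps K False y * (ln (cond_prob ps K False y / Qh ps K y))^2)"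
proof -
  let ?P = "cond_prob ps K False" and ?r = "\<lambda>y. cond_prob ps K False y / Qh ps K y"
  have "Fs ps K s False = (\<Sum>y\<in>out_set K. ?P y * ?r y powr s)" by (simp add: Fs_def)
  also have "\<dots> \<le> (\<Sum>y\<in>out_set K. ?P y) + s * (\<Sum>y\<in>out_set K. ?P y * ln (?r y)) + s^2 * (\<Sum>y\<in>out_set K. ?P y * (ln (?r y))^2)"
  proof (rule tilt)
    fix y assume "y \<in> out_set K" "?P y > 0"
    have le: "?P y \<le> 2 * Qh ps K y" by (rule cond_le_Qh[OF ps])
    then have Q: "Qh ps K y > 0" using \<open>?P y > 0\<close> by linarith
    then have r: "?r y > 0" using \<open>?P y > 0\<close> by simp
    have "?r y \<le> 2" using le Q by (simp add: divide_le_eq mult.commute)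
    then have "ln (?r y) \<le> ln 2" using r by simp
    then have "ln (?r y) < 1" using ln_2_less_1 by linarith
    then have "s * ln (?r y) \<le> 1"
    proof (cases "ln (?r y) \<ge> 0")
      case True then show ?thesis using s \<open>ln (?r y) < 1\<close>
        by (smt (verit) mult_right_le_one_le)
    next
      case False then show ?thesis using s by (smt (verit) mult_nonneg_nonpos)
    qed
    with r show "?r y > 0 \<and> s * ln (?r y) \<le> 1" by simp
  qed (use s cond_nonneg[OF ps] finite_out_set in auto)
  also have "(\<Sum>y\<in>out_set K. ?P y * ln (?r y)) = ln 2 * Dv ps K False"
    unfolding Dv_def sum_distrib_left by (intro sum.cong refl) (auto simp: log_def)
  finally show ?thesis by (simp add: cond_sum mult.assoc)
qed

lemma H_bound:
  fixes p s :: real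
  assumes p: "0 \<le> p" "p \<le> 1/2" and s: "0 \<le> s"
  shows "p * p powr s + (1 - p) * (1 - p) powr s \<le> 1 - s * ln 2 * binary_entropy p
     + s^2 * (p * (ln p)^2 + (1 - p) * (ln (1 - p))^2)"
proof -
  let ?P = "\<lambda>b. if b then p else 1 - p"
  have "p * p powr s + (1 - p) * (1 - p) powr s = (\<Sum>b\<in>UNIV. ?P b * ?P b powr s)"
    by (simp add: UNIV_bool)
  also have "\<dots> \<le> (\<Sum>b\<in>UNIV. ?P b) + s * (\<Sum>b\<in>UNIV. ?P b * ln (?P b)) + s^2 * (\<Sum>b\<in>UNIV. ?P b * (ln (?P b))^2)"
  proof (rule tilt)
    fix b :: bool assume "?P b > 0"
    moreover have "?P b \<le> 1" using p by auto
    ultimately have "ln (?P b) \<le> 0" by simp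
    with \<open>?P b > 0\<close> s show "?P b > 0 \<and> s * ln (?P b) \<le> 1"
      by (smt (verit) mult_nonneg_nonpos)
  qed (use p s in auto)
  also have "(\<Sum>b\<in>UNIV. ?P b * ln (?P b)) = - ln 2 * binary_entropy p"
  proof (cases "p = 0")
    case True then show ?thesis by (simp add: UNIV_bool binary_entropy_def)
  next
    case False
    then have "p \<noteq> 1" "p > 0" using p by auto
    then show ?thesis using False
      by (simp add: UNIV_bool binary_entropy_def log_def field_simps)
  qed
  finally show ?thesis by (simp add: UNIV_bool algebra_simps)
qed



lemma M_ge: "real (nat \<lceil>2 powr (real n * R)\<rceil>) \<ge> 2 powr (real n * R)"
  by (rule real_nat_ceiling_ge)

lemma M_pos: "nat \<lceil>2 powr (real n * R)\<rceil> > 0"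
proof -
  have "(0::real) < 2 powr (real n * R)" by simp
  then show ?thesis by linarith
qed

lemma cut1:
  assumes ps: "\<forall>i<K. 0 \<le> ps i \<and> ps i \<le> 1" and pd: "\<forall>i<K. 0 \<le> pd i \<and> pd i \<le> 1"
    and R: "R > mutual_info ps K (1/2)"
  shows "\<not> achievable K ps pd R"
proof -
  define I where "I = mutual_info ps K (1/2)"
  define eta where "eta = (R - I) / 2"
  define C where "C = (\<Sum>y\<in>out_set K. cond_prob ps K False y * (ln (cond_prob ps K False y / Qh ps K y))^2)"
  have eta: "eta > 0" using R by (simp add: eta_def I_def)
  have C: "C \<ge> 0" unfolding C_def by (intro sum_nonneg mult_nonneg_nonneg cond_nonneg ps) auto
  obtain s where s: "s > 0" "s \<le> 1" "s * C - eta * ln 2 < 0" using pick_s[OF eta C] by blast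
  show ?thesis
  proof (rule not_achievable[where a="exp (s * (s * C - eta * ln 2))" and b="exp (- eta * ln 2)"])
    show "exp (s * (s * C - eta * ln 2)) < 1" using s by (simp add: mult_pos_neg)
    show "exp (- eta * ln 2) < 1" using eta by simp
  next
    fix n fS fR g
    let ?M = "nat \<lceil>2 powr (real n * R)\<rceil>"
    let ?tau = "exp (real n * (I + eta) * ln 2)"
    have Fb: "Fs ps K s False \<le> exp (s * ln 2 * I + s^2 * C)"
    proof -
      have "Fs ps K s False \<le> 1 + (s * ln 2 * I + s^2 * C)"
        using Fs_bound[OF ps, of s] s by (simp add: I_def mi_half C_def add.assoc)
      then show ?thesis using exp_ge_add_one_self by (rule order_trans)
    qed
    have Fnn: "0 \<le> Fs ps K s False"
      unfolding Fs_def by (intro sum_nonneg mult_nonneg_nonneg cond_nonneg ps) auto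
    have succ: "succ K ps pd n ?M fS fR g \<le> real ?M * ?tau powr (-s) * (Fs ps K s False)^n + ?tau"
      using cut1_succ[OF ps pd, of ?tau s n ?M fS fR g] s by (simp add: Fs_sym)
    have "succ K ps pd n ?M fS fR g / real ?M \<le> exp (s * (s * C - eta * ln 2))^n + exp (- eta * ln 2)^n"
    proof (rule final_bound[OF eta s(1) _ _ _ M_ge refl succ])
      show "R = I + 2 * eta" by (simp add: eta_def field_simps)
      show "0 \<le> Fs ps K s False ^ n" using Fnn by simp
      have "Fs ps K s False ^ n \<le> exp (s * ln 2 * I + s^2 * C) ^ n"
        by (intro power_mono Fb Fnn)
      then show "Fs ps K s False ^ n \<le> exp (real n * (s * ln 2 * I + s^2 * C))"
        by (simp add: exp_of_nat_mult)
    qed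
    then show "1 - exp (s * (s * C - eta * ln 2)) ^ n - exp (- eta * ln 2) ^ n \<le> error_prob K ps pd n ?M fS fR g"
      by (simp add: error_succ[OF M_pos])
  qed simp_all
qed

lemma powr_lem3: "(tau / (c::real)) powr (-s) = tau powr (-s) * c powr s"
  by (simp add: powr_divide powr_minus_divide)

lemma cut2:
  assumes ps: "\<forall>i<K. 0 \<le> ps i \<and> ps i \<le> 1" and pd: "\<forall>i<K. 0 \<le> pd i \<and> pd i \<le> 1/2"
    and R: "R > real K - (\<Sum>i<K. binary_entropy (pd i))"
  shows "\<not> achievable K ps pd R"
proof -
  define I where "I = real K - (\<Sum>i<K. binary_entropy (pd i))"
  define eta where "eta = (R - I) / 2"
  define c where "c i = pd i * (ln (pd i))^2 + (1 - pd i) * (ln (1 - pd i))^2" for i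
  define C where "C = (\<Sum>i<K. c i)"
  define G where "G s = (\<Prod>i<K. pd i * pd i powr s + (1 - pd i) * (1 - pd i) powr s)" for s
  have pd1: "\<forall>i<K. 0 \<le> pd i \<and> pd i \<le> 1" using pd by auto
  have eta: "eta > 0" using R by (simp add: eta_def I_def)
  have C: "C \<ge> 0" unfolding C_def c_def using pd by (intro sum_nonneg add_nonneg_nonneg mult_nonneg_nonneg) auto
  obtain s where s: "s > 0" "s \<le> 1" "s * C - eta * ln 2 < 0" using pick_s[OF eta C] by blast
  have Gnn: "0 \<le> G s" unfolding G_def using pd by (intro prod_nonneg add_nonneg_nonneg mult_nonneg_nonneg) auto
  have Gb: "G s \<le> exp (- s * ln 2 * (\<Sum>i<K. binary_entropy (pd i)) + s^2 * C)"
  proof -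
    have "G s \<le> (\<Prod>i<K. exp (- s * ln 2 * binary_entropy (pd i) + s^2 * c i))"
      unfolding G_def
    proof (intro prod_mono conjI)
      fix i assume "i \<in> {..<K}"
      then have p: "0 \<le> pd i" "pd i \<le> 1/2" using pd by auto
      show "0 \<le> pd i * pd i powr s + (1 - pd i) * (1 - pd i) powr s" using p by auto
      show "pd i * pd i powr s + (1 - pd i) * (1 - pd i) powr s \<le> exp (- s * ln 2 * binary_entropy (pd i) + s^2 * c i)"
      proof -
        have "pd i * pd i powr s + (1 - pd i) * (1 - pd i) powr s \<le> 1 + (- s * ln 2 * binary_entropy (pd i) + s^2 * c i)"
          using H_bound[OF p, of s] s by (simp add: c_def)
        then show ?thesis using exp_ge_add_one_self by (rule order_trans)
      qed
    qed
    also have "\<dots> = exp (- s * ln 2 * (\<Sum>i<K. binary_entropy (pd i)) + s^2 * C)"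
      by (subst exp_sum[symmetric]) (simp_all add: C_def sum.distrib sum_distrib_left mult.assoc sum_negf sum_subtractf)
    finally show ?thesis .
  qed
  show ?thesis
  proof (rule not_achievable[where a="exp (s * (s * C - eta * ln 2))" and b="exp (- eta * ln 2)"])
    show "exp (s * (s * C - eta * ln 2)) < 1" using s by (simp add: mult_pos_neg)
    show "exp (- eta * ln 2) < 1" using eta by simp
  next
    fix n fS fR g
    let ?M = "nat \<lceil>2 powr (real n * R)\<rceil>"
    let ?tau = "exp (real n * (I + eta) * ln 2)"
    let ?Y = "(2^(K*n)) powr s * (G s)^n"
    have succ: "succ K ps pd n ?M fS fR g \<le> real ?M * ?tau powr (-s) * ?Y + ?tau"
      using cut2_succ[OF ps pd1, of ?tau s n ?M fS fR g] s by (simp add: powr_lem3 G_def mult.assoc)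
    have "succ K ps pd n ?M fS fR g / real ?M \<le> exp (s * (s * C - eta * ln 2))^n + exp (- eta * ln 2)^n"
    proof (rule final_bound[OF eta s(1) _ _ _ M_ge refl succ])
      show "R = I + 2 * eta" by (simp add: eta_def field_simps)
      show "0 \<le> ?Y" using Gnn by simp
      have "(G s)^n \<le> exp (- s * ln 2 * (\<Sum>i<K. binary_entropy (pd i)) + s^2 * C) ^ n"
        by (intro power_mono Gb Gnn)
      also have "\<dots> = exp (real n * (- s * ln 2 * (\<Sum>i<K. binary_entropy (pd i)) + s^2 * C))"
        by (simp add: exp_of_nat_mult)
      finally have g: "(G s)^n \<le> \<dots>" .
      have two: "(2^(K*n)) powr s = exp (real n * (s * ln 2 * real K))"
        by (simp add: powr_def ln_realpow algebra_simps)
      have "?Y \<le> exp (real n * (s * ln 2 * real K)) * exp (real n * (- s * ln 2 * (\<Sum>i<K. binary_entropy (pd i)) + s^2 * C))"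
        unfolding two by (intro mult_left_mono g) auto
      also have "\<dots> = exp (real n * (s * ln 2 * I + s^2 * C))"
        by (simp add: exp_add[symmetric] I_def algebra_simps)
      finally show "?Y \<le> exp (real n * (s * ln 2 * I + s^2 * C))" .
    qed
    then show "1 - exp (s * (s * C - eta * ln 2)) ^ n - exp (- eta * ln 2) ^ n \<le> error_prob K ps pd n ?M fS fR g"
      by (simp add: error_succ[OF M_pos])
  qed simp_all
qed

lemma mi_bdd:
  assumes ps: "\<forall>i<K. 0 \<le> ps i \<and> ps i \<le> 1"
  shows "bdd_above (mutual_info ps K ` {0..1})"
proof (rule bdd_aboveI2)
  fix q :: real assume q: "q \<in> {0..1}"
  have ip: "0 \<le> in_prob q u" for u using q by (auto simp: in_prob_def)
  have trm: "(let a = in_prob q u * cond_prob ps K u v;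
             pv = (\<Sum>u'\<in>(UNIV :: bool set). in_prob q u' * cond_prob ps K u' v)
         in if a = 0 then 0 else a * log 2 (cond_prob ps K u v / pv)) \<le> cond_prob ps K u v / ln 2" for u v
  proof -
    define a where "a = in_prob q u * cond_prob ps K u v"
    define pv where "pv = (\<Sum>u'\<in>(UNIV :: bool set). in_prob q u' * cond_prob ps K u' v)"
    have c0: "0 \<le> cond_prob ps K u v" by (rule cond_nonneg[OF ps])
    have a0: "0 \<le> a" unfolding a_def using ip c0 by simp
    have apv: "a \<le> pv" unfolding a_def pv_def
      by (rule member_le_sum) (auto intro!: mult_nonneg_nonneg ip cond_nonneg ps)
    show ?thesis
    proof (cases "a = 0")
      case True then show ?thesis using c0 by (simp add: a_def[symmetric] pv_def[symmetric] Let_def)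
    next
      case False
      then have a: "a > 0" using a0 by simp
      then have pv: "pv > 0" using apv by simp
      have c: "cond_prob ps K u v > 0" using a c0 ip[of u] unfolding a_def
        by (metis less_eq_real_def mult_zero_right)
      have "log 2 (cond_prob ps K u v / pv) \<le> (cond_prob ps K u v / pv) / ln 2"
      proof -
        have "ln (cond_prob ps K u v / pv) \<le> cond_prob ps K u v / pv"
          using ln_less_self[of "cond_prob ps K u v / pv"] c pv divide_pos_pos less_imp_le by blast
        then show ?thesis unfolding log_def by (intro divide_right_mono) auto
      qed
      then have "a * log 2 (cond_prob ps K u v / pv) \<le> a * ((cond_prob ps K u v / pv) / ln 2)"
        using a0 by (intro mult_left_mono)
      also have "\<dots> = (a / pv) * (cond_prob ps K u v / ln 2)" by simp
      also have "\<dots> \<le> 1 * (cond_prob ps K u v / ln 2)"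
        using apv pv c0 by (intro mult_right_mono) auto
      finally show ?thesis using False by (simp add: a_def[symmetric] pv_def[symmetric] Let_def)
    qed
  qed
  have "mutual_info ps K q \<le> (\<Sum>u\<in>(UNIV::bool set). \<Sum>v\<in>out_set K. cond_prob ps K u v / ln 2)"
    unfolding mutual_info_def by (intro sum_mono trm)
  also have "\<dots> = 2 / ln 2" by (simp add: sum_divide_distrib[symmetric] cond_sum UNIV_bool)
  finally show "mutual_info ps K q \<le> 2 / ln 2" .
qed

lemma zero_achievable: "achievable K ps pd 0"
  unfolding achievable_def
  by (auto intro!: exI[of _ 0] exI[of _ "\<lambda>i t v. False"] exI[of _ "\<lambda>_. 0"]
      simp: causal_relays_def error_prob_def)

theorem theorem1:
  fixes K :: nat and ps pd :: "nat \<Rightarrow> real"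
  assumes "K \<ge> 1"
    and "\<forall>i<K. 0 \<le> ps i \<and> ps i \<le> 1/2"
    and "\<forall>i<K. 0 \<le> pd i \<and> pd i \<le> 1/2"
  shows "capacity K ps pd \<le> R_ub K ps pd"
proof -
  have ps: "\<forall>i<K. 0 \<le> ps i \<and> ps i \<le> 1" using assms(2) by auto
  have pd1: "\<forall>i<K. 0 \<le> pd i \<and> pd i \<le> 1" using assms(3) by auto
  have mi: "mutual_info ps K (1/2) \<le> (SUP q\<in>{0..1}. mutual_info ps K q)"
    by (rule cSUP_upper[OF _ mi_bdd[OF ps]]) auto
  show ?thesis
    unfolding capacity_def R_ub_def
  proof (rule cSup_least)
    show "{R. achievable K ps pd R} \<noteq> {}" using zero_achievable by blast
  next
    fix R assume "R \<in> {R. achievable K ps pd R}"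
    then have a: "achievable K ps pd R" by simp
    have "R \<le> mutual_info ps K (1/2)" using cut1[OF ps pd1] a by force
    moreover have "R \<le> real K - (\<Sum>i<K. binary_entropy (pd i))" using cut2[OF ps assms(3)] a by force
    ultimately show "R \<le> min (SUP q\<in>{0..1}. mutual_info ps K q) (real K - (\<Sum>i<K. binary_entropy (pd i)))"
      using mi by simp
  qed
qed

end
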